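(* Let $\Lambda=(\mathcal{L}\subset\mathbb{R}^s,\mathbb{R}^n)$ be a generic cut-and-project scheme with associated matrix $L$, and let $A\in\mathbb{R}^{n\times n}$ be a non-singular matrix diagonalizable over $\mathbb{C}$ which is a self-similarity of $\Lambda$, with $B\in\mathbb{R}^{(s-n)\times(s-n)}$, $C\in\mathbb{Z}^{s\times s}$ the (unique) matrices such that $\begin{pmatrix}A&O\\O&B\end{pmatrix}L=LC$. Let $\Omega\subset\mathbb{R}^{s-n}$ be bounded with $\overline{\Omega^\circ}=\overline{\Omega}$. Then: (i) if $B\Omega\subset\Omega$, then $A\Sigma(\Omega)\subset\Sigma(\Omega)$; (ii) if $A\Sigma(\Omega)\subset\Sigma(\Omega)$, then $B\overline{\Omega}\subset\overline{\Omega}$.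
   Context: A lattice $\mathcal{L}\subset\mathbb{R}^s$ is $\{L\mathbf{r}:\mathbf{r}\in\mathbb{Z}^s\}$ for a non-singular $L\in\mathbb{R}^{s\times s}$. For $1\le n<s$ the scheme $(\mathcal{L}\subset\mathbb{R}^s,\mathbb{R}^n)$ has projections $\pi_\parallel(\mathbf{x})=(x_1,\dots,x_n)^\top$, $\pi_\perp(\mathbf{x})=(x_{n+1},\dots,x_s)^\top$; it is generic if $\pi_\parallel|_{\mathcal{L}}$, $\pi_\perp|_{\mathcal{L}}$ are injective and $\pi_\perp(\mathcal{L})$ is dense in $\mathbb{R}^{s-n}$. $A$ is a self-similarity of a generic scheme if $A\pi_\parallel(\mathcal{L})\subset\pi_\parallel(\mathcal{L})$ and there exist $C\in\mathbb{Z}^{s\times s}$, $B$ real with $\begin{pmatrix}A&O\\O&B\end{pmatrix}L=LC$. The cut-and-project set is $\Sigma(\Omega)=\{\pi_\parallel(\mathbf{l}):\mathbf{l}\in\mathcal{L},\ \pi_\perp(\mathbf{l})\in\Omega\}$. *)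

theory Defs
  imports "HOL-Analysis.Analysis"
begin

text \<open>Ambient space R^s is modelled as real^('n + 'm): the physical space R^n is
  real^'n (coordinates Inl i) and the internal space R^(s-n) is real^'m (coordinates Inr j).\<close>

definition par_proj :: "real^('n::finite + 'm::finite) \<Rightarrow> real^'n" where
  "par_proj x = (\<chi> i. x $ Inl i)"

definition perp_proj :: "real^('n::finite + 'm::finite) \<Rightarrow> real^'m" where
  "perp_proj x = (\<chi> j. x $ Inr j)"

definition int_vec :: "real^'k \<Rightarrow> bool" where
  "int_vec r \<longleftrightarrow> (\<forall>i. r $ i \<in> \<int>)"

definition int_mat :: "real^'k^'l \<Rightarrow> bool" where
  "int_mat C \<longleftrightarrow> (\<forall>i j. C $ i $ j \<in> \<int>)"

definition lattice_of :: "real^'k^'k \<Rightarrow> (real^'k) set" where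
  "lattice_of L = {L *v r | r. int_vec r}"

definition generic_cps :: "real^('n::finite + 'm::finite)^('n + 'm) \<Rightarrow> bool" where
  "generic_cps L \<longleftrightarrow> invertible L
     \<and> inj_on (par_proj :: real^('n + 'm) \<Rightarrow> real^'n) (lattice_of L)
     \<and> inj_on (perp_proj :: real^('n + 'm) \<Rightarrow> real^'m) (lattice_of L)
     \<and> closure ((perp_proj :: real^('n + 'm) \<Rightarrow> real^'m) ` lattice_of L) = UNIV"

definition block_diag :: "real^'n::finite^'n \<Rightarrow> real^'m::finite^'m \<Rightarrow> real^('n + 'm)^('n + 'm)" where
  "block_diag A B = (\<chi> i j. case (i, j) of
      (Inl a, Inl b) \<Rightarrow> A $ a $ b
    | (Inr a, Inr b) \<Rightarrow> B $ a $ b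
    | _ \<Rightarrow> 0)"

definition cps_set :: "real^('n::finite + 'm::finite)^('n + 'm) \<Rightarrow> (real^'m) set \<Rightarrow> (real^'n) set" where
  "cps_set L \<Omega> = {par_proj l | l. l \<in> lattice_of L \<and> perp_proj l \<in> \<Omega>}"

definition diagonalizable_over_C :: "real^'n^'n \<Rightarrow> bool" where
  "diagonalizable_over_C A \<longleftrightarrow>
     (\<exists>(P :: complex^'n^'n) (D :: complex^'n^'n).
        invertible P \<and> (\<forall>i j. i \<noteq> j \<longrightarrow> D $ i $ j = 0)
        \<and> (\<chi> i j. complex_of_real (A $ i $ j)) ** P = P ** D)"

end

theory Submission
  imports Defs
begin

lemma bd_par:
  fixes A :: "real^'n::finite^'n" and B :: "real^'m::finite^'m"
  shows "par_proj (block_diag A B *v x) = A *v par_proj x"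
  unfolding par_proj_def block_diag_def
  by (simp add: vec_eq_iff matrix_vector_mult_def sum.Plus UNIV_Plus_UNIV[symmetric] del: UNIV_Plus_UNIV)

lemma bd_perp:
  fixes A :: "real^'n::finite^'n" and B :: "real^'m::finite^'m"
  shows "perp_proj (block_diag A B *v x) = B *v perp_proj x"
  unfolding perp_proj_def block_diag_def
  by (simp add: vec_eq_iff matrix_vector_mult_def sum.Plus UNIV_Plus_UNIV[symmetric] del: UNIV_Plus_UNIV)

lemma int_vec_mult:
  assumes "int_mat C" "int_vec r"
  shows "int_vec (C *v r)"
  using assms unfolding int_mat_def int_vec_def matrix_vector_mult_def
  by (auto intro!: Ints_sum Ints_mult)

lemma bd_lattice:
  fixes L :: "real^('n::finite + 'm::finite)^('n + 'm)"
  assumes "int_mat C" "block_diag A B ** L = L ** C" "l \<in> lattice_of L"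
  shows "block_diag A B *v l \<in> lattice_of L"
proof -
  obtain r where r: "l = L *v r" "int_vec r" using assms(3) unfolding lattice_of_def by auto
  have "block_diag A B *v l = L *v (C *v r)"
    using assms(2) by (simp add: r matrix_vector_mul_assoc)
  thus ?thesis using int_vec_mult[OF assms(1) r(2)] unfolding lattice_of_def by auto
qed

theorem proposition9:
  fixes L :: "real^('n::finite + 'm::finite)^('n + 'm)"
    and A :: "real^'n^'n"
    and B :: "real^'m^'m"
    and C :: "real^('n + 'm)^('n + 'm)"
    and \<Omega> :: "(real^'m) set"
  assumes generic: "generic_cps L"
    and A_nonsing: "invertible A"
    and A_diag: "diagonalizable_over_C A"
    and A_selfsim: "(\<lambda>x. A *v x) ` ((par_proj :: real^('n + 'm) \<Rightarrow> real^'n) ` lattice_of L)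
                      \<subseteq> (par_proj :: real^('n + 'm) \<Rightarrow> real^'n) ` lattice_of L"
    and C_int: "int_mat C"
    and block_eq: "block_diag A B ** L = L ** C"
    and \<Omega>_bdd: "bounded \<Omega>"
    and \<Omega>_reg: "closure (interior \<Omega>) = closure \<Omega>"
  shows "((\<lambda>y. B *v y) ` \<Omega> \<subseteq> \<Omega> \<longrightarrow> (\<lambda>x. A *v x) ` cps_set L \<Omega> \<subseteq> cps_set L \<Omega>)
       \<and> ((\<lambda>x. A *v x) ` cps_set L \<Omega> \<subseteq> cps_set L \<Omega> \<longrightarrow> (\<lambda>y. B *v y) ` closure \<Omega> \<subseteq> closure \<Omega>)"
proof (intro conjI impI)
  let ?M = "block_diag A B"
  have lat: "\<And>l. l \<in> lattice_of L \<Longrightarrow> ?M *v l \<in> lattice_of L"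
    using bd_lattice[OF C_int block_eq] by blast
  {
    assume BO: "(\<lambda>y. B *v y) ` \<Omega> \<subseteq> \<Omega>"
    show "(\<lambda>x. A *v x) ` cps_set L \<Omega> \<subseteq> cps_set L \<Omega>"
    proof
      fix z assume "z \<in> (\<lambda>x. A *v x) ` cps_set L \<Omega>"
      then obtain l where l: "l \<in> lattice_of L" "perp_proj l \<in> \<Omega>" "z = A *v par_proj l"
        unfolding cps_set_def by auto
      have "z = par_proj (?M *v l)" using l(3) bd_par by metis
      moreover have "perp_proj (?M *v l) \<in> \<Omega>" using BO l(2) by (auto simp: bd_perp)
      ultimately show "z \<in> cps_set L \<Omega>" using lat[OF l(1)] unfolding cps_set_def by blast
    qed
  }
  {
    assume AS: "(\<lambda>x. A *v x) ` cps_set L \<Omega> \<subseteq> cps_set L \<Omega>"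
    let ?D = "(perp_proj :: real^('n + 'm) \<Rightarrow> real^'m) ` lattice_of L"
    have injp: "inj_on (par_proj :: real^('n + 'm) \<Rightarrow> real^'n) (lattice_of L)"
      and dense: "closure ?D = UNIV" using generic unfolding generic_cps_def by auto
    have key: "(\<lambda>y. B *v y) ` (interior \<Omega> \<inter> ?D) \<subseteq> \<Omega>"
    proof
      fix w assume "w \<in> (\<lambda>y. B *v y) ` (interior \<Omega> \<inter> ?D)"
      then obtain l where l: "l \<in> lattice_of L" "perp_proj l \<in> \<Omega>" "w = B *v perp_proj l"
        using interior_subset by blast
      have "par_proj l \<in> cps_set L \<Omega>" using l unfolding cps_set_def by blast
      hence "A *v par_proj l \<in> cps_set L \<Omega>" using AS by blast
      then obtain l' where l': "l' \<in> lattice_of L" "perp_proj l' \<in> \<Omega>" "A *v par_proj l = par_proj l'"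
        unfolding cps_set_def by auto
      have "par_proj (?M *v l) = par_proj l'" using l'(3) bd_par by metis
      hence "?M *v l = l'" using injp lat[OF l(1)] l'(1) by (auto dest: inj_onD)
      hence "w = perp_proj l'" using l(3) bd_perp by metis
      thus "w \<in> \<Omega>" using l'(2) by simp
    qed
    have "interior \<Omega> \<subseteq> closure (interior \<Omega> \<inter> ?D)"
      using open_Int_closure_subset[of "interior \<Omega>" ?D] dense by auto
    hence "closure \<Omega> \<subseteq> closure (interior \<Omega> \<inter> ?D)"
      using \<Omega>_reg closure_minimal by (metis closed_closure)
    moreover have "(\<lambda>y. B *v y) ` closure (interior \<Omega> \<inter> ?D) \<subseteq> closure \<Omega>"
      by (rule image_closure_subset) (use key closure_subset in \<open>auto intro!: linear_continuous_on bounded_linear_intros matrix_vector_mul_linear\<close>)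
    ultimately show "(\<lambda>y. B *v y) ` closure \<Omega> \<subseteq> closure \<Omega>" by blast
  }
qed

end
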